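(* For any composition $\beta$ of an even positive integer, \[\sum_{\substack{\alpha\le\beta\\ a_1,a_k\ \text{odd}}}(-1)^{k_e(\alpha)}\,2^{k_o(\beta)-k_o(\alpha)+1}\,C\bigl(k_o(\alpha)/2-1\bigr)=2^{k_o(\beta)}-\binom{k_o(\beta)}{k_o(\beta)/2},\] where the sum is over those compositions $\alpha=(a_1,\ldots,a_k)$ whose first and last parts are odd and which are refined by $\beta$.
   Context: A composition is a finite sequence of positive integers; $k_e(\alpha)$, $k_o(\alpha)$ are its numbers of even and odd parts. $\alpha\le\beta$ means $\beta$ refines $\alpha$ (obtained from $\alpha$ by splitting parts), including $\alpha=\beta$. $C(j)=\frac{1}{j+1}\binom{2j}{j}$ is the Catalan number. *)

theory Defs
  imports Main
begin

definition is_composition :: "nat list \<Rightarrow> bool" where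
  "is_composition xs \<longleftrightarrow> (\<forall>x\<in>set xs. 0 < x)"

definition k_e :: "nat list \<Rightarrow> nat" where
  "k_e xs = length (filter even xs)"

definition k_o :: "nat list \<Rightarrow> nat" where
  "k_o xs = length (filter odd xs)"

text \<open>refines alpha beta: alpha \<le> beta, i.e. beta refines alpha (beta is obtained
  from alpha by splitting parts, equivalently alpha is obtained from beta by merging
  consecutive blocks of parts); includes alpha = beta.\<close>
definition refines :: "nat list \<Rightarrow> nat list \<Rightarrow> bool" where
  "refines \<alpha> \<beta> \<longleftrightarrow>
     (\<exists>bs. (\<forall>b\<in>set bs. b \<noteq> []) \<and> concat bs = \<beta> \<and> map sum_list bs = \<alpha>)"

definition catalan :: "nat \<Rightarrow> nat" where
  "catalan j = ((2 * j) choose j) div (j + 1)"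

end

theory Submission
  imports Defs
begin

definition shift :: "nat \<Rightarrow> nat list \<Rightarrow> nat list" where
  "shift t \<alpha> = (t + hd \<alpha>) # tl \<alpha>"

lemma refines_Nil: "refines \<alpha> [] \<longleftrightarrow> \<alpha> = []"
  unfolding refines_def by auto

lemma refines_Cons:
  assumes "\<beta> \<noteq> []"
  shows "refines \<alpha> (b#\<beta>) \<longleftrightarrow> (\<exists>\<alpha>'. refines \<alpha>' \<beta> \<and> (\<alpha> = b#\<alpha>' \<or> \<alpha> = shift b \<alpha>'))"
proof
  assume "refines \<alpha> (b#\<beta>)"
  then obtain bs where bs: "\<forall>c\<in>set bs. c \<noteq> []" "concat bs = b#\<beta>" "map sum_list bs = \<alpha>"
    unfolding refines_def by blast
  then obtain c bss where cb: "bs = c # bss" by (cases bs) auto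
  with bs obtain xs where c: "c = b # xs" and \<beta>: "\<beta> = xs @ concat bss"
    by (cases c) auto
  show "\<exists>\<alpha>'. refines \<alpha>' \<beta> \<and> (\<alpha> = b#\<alpha>' \<or> \<alpha> = shift b \<alpha>')"
  proof (cases "xs = []")
    case True
    have "refines (map sum_list bss) \<beta>" unfolding refines_def
      using bs cb \<beta> True by (intro exI[of _ bss]) auto
    moreover have "\<alpha> = b # map sum_list bss" using bs cb c True by auto
    ultimately show ?thesis by blast
  next
    case False
    have "refines (sum_list xs # map sum_list bss) \<beta>" unfolding refines_def
      using bs cb \<beta> False by (intro exI[of _ "xs#bss"]) auto
    moreover have "\<alpha> = shift b (sum_list xs # map sum_list bss)"
      using bs cb c by (auto simp: shift_def)
    ultimately show ?thesis by blast
  qed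
next
  assume "\<exists>\<alpha>'. refines \<alpha>' \<beta> \<and> (\<alpha> = b#\<alpha>' \<or> \<alpha> = shift b \<alpha>')"
  then obtain \<alpha>' bs where bs: "\<forall>c\<in>set bs. c \<noteq> []" "concat bs = \<beta>" "map sum_list bs = \<alpha>'"
    and a: "\<alpha> = b#\<alpha>' \<or> \<alpha> = shift b \<alpha>'"
    unfolding refines_def by blast
  from a show "refines \<alpha> (b#\<beta>)"
  proof
    assume "\<alpha> = b#\<alpha>'"
    then show ?thesis unfolding refines_def using bs by (intro exI[of _ "[b]#bs"]) auto
  next
    assume a2: "\<alpha> = shift b \<alpha>'"
    from bs assms obtain c bss where cb: "bs = c # bss" by (cases bs) auto
    show ?thesis unfolding refines_def using bs cb a2
      by (intro exI[of _ "(b#c)#bss"]) (auto simp: shift_def)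
  qed
qed

lemma R_Cons:
  assumes "\<beta> \<noteq> []"
  shows "{\<alpha>. refines \<alpha> (b#\<beta>)} = Cons b ` {\<alpha>. refines \<alpha> \<beta>} \<union> shift b ` {\<alpha>. refines \<alpha> \<beta>}"
  using refines_Cons[OF assms] by auto

lemma concat_single:
  assumes "\<forall>c\<in>set bs. c \<noteq> []" "concat bs = [b]" shows "bs = [[b]]"
proof (cases bs)
  case Nil then show ?thesis using assms by simp
next
  case (Cons c bss)
  then show ?thesis using assms by (cases c) auto
qed

lemma R_single: "{\<alpha>. refines \<alpha> [b]} = {[b]}"
proof -
  have "refines \<alpha> [b] \<longleftrightarrow> \<alpha> = [b]" for \<alpha>
  proof
    assume "refines \<alpha> [b]"
    then obtain bs where "\<forall>c\<in>set bs. c \<noteq> []" "concat bs = [b]" "map sum_list bs = \<alpha>"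
      unfolding refines_def by blast
    then show "\<alpha> = [b]" using concat_single by force
  next
    assume "\<alpha> = [b]"
    then show "refines \<alpha> [b]" unfolding refines_def by (intro exI[of _ "[[b]]"]) auto
  qed
  then show ?thesis by auto
qed

lemma refines_nonempty: "refines \<alpha> \<beta> \<Longrightarrow> \<beta> \<noteq> [] \<Longrightarrow> \<alpha> \<noteq> []"
  unfolding refines_def by auto

lemma refines_pos:
  assumes "refines \<alpha> \<beta>" "is_composition \<beta>" shows "is_composition \<alpha>"
proof -
  obtain bs where bs: "\<forall>c\<in>set bs. c \<noteq> []" "concat bs = \<beta>" "map sum_list bs = \<alpha>"
    using assms(1) unfolding refines_def by blast
  have "0 < sum_list c" if c: "c \<in> set bs" for c
  proof -
    obtain x xs where cx: "c = x # xs" using bs(1) c by (cases c) auto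
    have "x \<in> set \<beta>" using bs(2) c cx by force
    then have "0 < x" using assms(2) unfolding is_composition_def by auto
    then show ?thesis using cx by simp
  qed
  then show ?thesis using bs(3) unfolding is_composition_def by auto
qed

lemma R_finite: "finite {\<alpha>. refines \<alpha> \<beta>}"
proof (induction \<beta>)
  case Nil
  then show ?case using refines_Nil by simp
next
  case (Cons b \<beta>)
  then show ?case
    by (cases "\<beta> = []") (simp_all add: R_single R_Cons)
qed

lemma sum_R_Cons:
  assumes "\<beta> \<noteq> []" "is_composition (b#\<beta>)"
  shows "(\<Sum>\<alpha>\<in>{\<alpha>. refines \<alpha> (b#\<beta>)}. f \<alpha>) =
    (\<Sum>\<alpha>\<in>{\<alpha>. refines \<alpha> \<beta>}. f (b#\<alpha>)) + (\<Sum>\<alpha>\<in>{\<alpha>. refines \<alpha> \<beta>}. f (shift b \<alpha>))"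
proof -
  let ?R = "{\<alpha>. refines \<alpha> \<beta>}"
  have cb: "is_composition \<beta>" using assms(2) by (simp add: is_composition_def)
  have disj: "Cons b ` ?R \<inter> shift b ` ?R = {}"
  proof (rule ccontr)
    assume "Cons b ` ?R \<inter> shift b ` ?R \<noteq> {}"
    then obtain x y where "x \<in> ?R" "y \<in> ?R" "b # x = shift b y" by auto
    moreover have "y \<noteq> []" using \<open>y \<in> ?R\<close> assms(1) refines_nonempty by auto
    moreover have "is_composition y" using \<open>y \<in> ?R\<close> cb refines_pos by auto
    ultimately show False by (cases y) (auto simp: shift_def is_composition_def)
  qed
  have inj1: "inj_on (Cons b) ?R" by (auto simp: inj_on_def)
  have inj2: "inj_on (shift b) ?R"
  proof (rule inj_onI)
    fix x y assume "x \<in> ?R" "y \<in> ?R" "shift b x = shift b y"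
    moreover have "x \<noteq> []" "y \<noteq> []" using calculation assms(1) refines_nonempty by auto
    ultimately show "x = y" by (cases x; cases y) (auto simp: shift_def)
  qed
  show ?thesis
    unfolding R_Cons[OF assms(1)]
    apply (subst sum.union_disjoint)
    using R_finite disj apply auto[3]
    apply (subst sum.reindex[OF inj1])
    apply (subst sum.reindex[OF inj2])
    by simp
qed

lemma shift_Cons[simp]: "shift t (x#xs) = (t+x)#xs" by (simp add: shift_def)
lemma shift_shift: "shift t (shift b \<alpha>) = shift (t+b) \<alpha>" by (simp add: shift_def add.assoc)
lemma k_o_Nil[simp]: "k_o [] = 0" by (simp add: k_o_def)
lemma k_e_Nil[simp]: "k_e [] = 0" by (simp add: k_e_def)
lemma k_o_Cons[simp]: "k_o (x#xs) = (if odd x then 1 else 0) + k_o xs" by (simp add: k_o_def)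
lemma k_e_Cons[simp]: "k_e (x#xs) = (if even x then 1 else 0) + k_e xs" by (simp add: k_e_def)

definition Tw :: "nat \<Rightarrow> (nat \<Rightarrow> int) \<Rightarrow> nat list \<Rightarrow> int" where
  "Tw t g \<alpha> = (if odd (last (shift t \<alpha>)) then (-1)^k_e (shift t \<alpha>) * g (k_o (shift t \<alpha>)) else 0)"

definition Sw :: "nat \<Rightarrow> (nat \<Rightarrow> int) \<Rightarrow> nat list \<Rightarrow> int" where
  "Sw t g \<alpha> = (if odd (hd (shift t \<alpha>)) \<and> odd (last (shift t \<alpha>))
     then (-1)^k_e (shift t \<alpha>) * g (k_o (shift t \<alpha>)) else 0)"

fun D :: "(nat \<Rightarrow> int) \<Rightarrow> nat \<Rightarrow> int" where
  "D g 0 = 0"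
| "D g (Suc 0) = g 1"
| "D g (Suc (Suc m)) = g (Suc (Suc m)) + D g m"

lemma T_lemma:
  assumes "\<beta> \<noteq> []" "is_composition \<beta>"
  shows "(\<Sum>\<alpha>\<in>{\<alpha>. refines \<alpha> \<beta>}. Tw t g \<alpha>) =
     (if odd (hd (shift t \<beta>)) then g (k_o (shift t \<beta>)) else 0)"
  using assms
proof (induction \<beta> arbitrary: t g)
  case Nil
  then show ?case by simp
next
  case (Cons b \<beta>)
  show ?case
  proof (cases "\<beta> = []")
    case True
    then show ?thesis by (simp add: R_single Tw_def)
  next
    case False
    have comp: "is_composition \<beta>" using Cons.prems by (simp add: is_composition_def)
    note IH = Cons.IH[OF False comp]
    obtain h r where \<beta>: "\<beta> = h # r" using False by (cases \<beta>) auto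
    have ne: "\<alpha> \<noteq> []" if "\<alpha> \<in> {\<alpha>. refines \<alpha> \<beta>}" for \<alpha>
      using that refines_nonempty False by auto
    have s1: "(\<Sum>\<alpha>\<in>{\<alpha>. refines \<alpha> \<beta>}. Tw t g (b#\<alpha>)) =
      (if even (t+b) then - (\<Sum>\<alpha>\<in>{\<alpha>. refines \<alpha> \<beta>}. Tw 0 g \<alpha>)
       else (\<Sum>\<alpha>\<in>{\<alpha>. refines \<alpha> \<beta>}. Tw 0 (\<lambda>j. g (Suc j)) \<alpha>))"
    proof (cases "even (t+b)")
      case True
      then show ?thesis
        by (simp add: sum_negf[symmetric], intro sum.cong refl)
           (use ne in \<open>auto simp: Tw_def shift_def\<close>)
    next
      case False
      then show ?thesis
        by (simp, intro sum.cong refl)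
           (use ne in \<open>auto simp: Tw_def shift_def\<close>)
    qed
    have s2: "(\<Sum>\<alpha>\<in>{\<alpha>. refines \<alpha> \<beta>}. Tw t g (shift b \<alpha>)) =
        (\<Sum>\<alpha>\<in>{\<alpha>. refines \<alpha> \<beta>}. Tw (t+b) g \<alpha>)"
      unfolding Tw_def shift_shift by simp
    show ?thesis
      unfolding sum_R_Cons[OF False Cons.prems(2)] s1 s2 IH
      by (simp add: \<beta>)
  qed
qed

lemma S_lemma:
  assumes "\<beta> \<noteq> []" "is_composition \<beta>"
  shows "(\<Sum>\<alpha>\<in>{\<alpha>. refines \<alpha> \<beta>}. Sw t g \<alpha>) = D g (k_o (shift t \<beta>))"
  using assms
proof (induction \<beta> arbitrary: t g)
  case Nil
  then show ?case by simp
next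
  case (Cons b \<beta>)
  show ?case
  proof (cases "\<beta> = []")
    case True
    then show ?thesis by (simp add: R_single Sw_def)
  next
    case False
    have comp: "is_composition \<beta>" using Cons.prems by (simp add: is_composition_def)
    note IH = Cons.IH[OF False comp]
    obtain h r where \<beta>: "\<beta> = h # r" using False by (cases \<beta>) auto
    have ne: "\<alpha> \<noteq> []" if "\<alpha> \<in> {\<alpha>. refines \<alpha> \<beta>}" for \<alpha>
      using that refines_nonempty False by auto
    have s1: "(\<Sum>\<alpha>\<in>{\<alpha>. refines \<alpha> \<beta>}. Sw t g (b#\<alpha>)) =
      (if even (t+b) then 0
       else (\<Sum>\<alpha>\<in>{\<alpha>. refines \<alpha> \<beta>}. Tw 0 (\<lambda>j. g (Suc j)) \<alpha>))"
    proof (cases "even (t+b)")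
      case True
      then show ?thesis
        by (simp, intro sum.neutral ballI) (simp add: Sw_def)
    next
      case False
      then show ?thesis
        by (simp, intro sum.cong refl)
           (use ne in \<open>auto simp: Tw_def Sw_def shift_def\<close>)
    qed
    have s2: "(\<Sum>\<alpha>\<in>{\<alpha>. refines \<alpha> \<beta>}. Sw t g (shift b \<alpha>)) =
        (\<Sum>\<alpha>\<in>{\<alpha>. refines \<alpha> \<beta>}. Sw (t+b) g \<alpha>)"
      unfolding Sw_def shift_shift by simp
    show ?thesis
      unfolding sum_R_Cons[OF False Cons.prems(2)] s1 s2 IH T_lemma[OF False comp]
      by (simp add: \<beta>)
  qed
qed

lemma D_even: "D g (2*n) = (\<Sum>l\<in>{1..n}. g (2*l))"
proof (induction n)
  case 0 then show ?case by simp
next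
  case (Suc n)
  have "D g (2 * Suc n) = g (2 * Suc n) + D g (2*n)"
    by (simp add: mult_2)
  then show ?case using Suc by (simp add: add.commute)
qed

lemma even_sum_k_o: "even (sum_list xs) \<longleftrightarrow> even (k_o (xs::nat list))"
  by (induction xs) auto

lemma binom_rel: "Suc n * ((2*n) choose Suc n) = n * ((2*n) choose n)"
proof (cases n)
  case 0 then show ?thesis by simp
next
  case (Suc k)
  have e: "Suc (n+k) = 2*n" using Suc by simp
  have "Suc n * ((2*n) choose Suc n) = Suc k * ((2*n) choose n)"
    using Suc_times_binomial_add[of n k] unfolding e .
  then show ?thesis using Suc by simp
qed

lemma catalan_eq: "int (catalan n) = int ((2*n) choose n) - int ((2*n) choose Suc n)"
proof -
  define B where "B = (2*n) choose n"
  define B' where "B' = (2*n) choose Suc n"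
  have h: "Suc n * B' = n * B" unfolding B_def B'_def by (rule binom_rel)
  have le: "B' \<le> B"
  proof -
    have "Suc n * B' \<le> Suc n * B" using h by simp
    then show ?thesis by (simp only: Suc_mult_le_cancel1)
  qed
  have "B = Suc n * (B - B')"
    using h le by (simp add: diff_mult_distrib2)
  then have "B div Suc n = B - B'" by (metis nonzero_mult_div_cancel_left nat.distinct(1))
  then show ?thesis unfolding catalan_def B_def[symmetric] B'_def[symmetric] using le by simp
qed

lemma binom_step: "int ((2*Suc n) choose Suc n) = 4 * int ((2*n) choose n) - 2 * int (catalan n)"
proof -
  have a: "(2*Suc n) choose Suc n = (Suc (2*n) choose n) + (Suc (2*n) choose Suc n)"
    by simp
  have b: "Suc (2*n) choose n = Suc (2*n) choose Suc n"
    using binomial_symmetric[of n "Suc (2*n)"] by (simp add: Suc_diff_le)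
  have c: "Suc (2*n) choose Suc n = ((2*n) choose n) + ((2*n) choose Suc n)" by simp
  show ?thesis unfolding catalan_eq using a b c by simp
qed

lemma cat_sum: "(\<Sum>l\<in>{1..n}. (2::int)^(2*n - 2*l + 1) * int (catalan (l-1)))
   = 4^n - int ((2*n) choose n)"
proof (induction n)
  case 0 then show ?case by simp
next
  case (Suc n)
  have "(\<Sum>l\<in>{1..Suc n}. (2::int)^(2*Suc n - 2*l + 1) * int (catalan (l-1)))
     = (\<Sum>l\<in>{1..n}. (2::int)^(2*Suc n - 2*l + 1) * int (catalan (l-1))) + 2 * int (catalan n)"
    by simp
  also have "(\<Sum>l\<in>{1..n}. (2::int)^(2*Suc n - 2*l + 1) * int (catalan (l-1)))
     = (\<Sum>l\<in>{1..n}. 4 * ((2::int)^(2*n - 2*l + 1) * int (catalan (l-1))))"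
  proof (rule sum.cong[OF refl])
    fix l assume "l \<in> {1..n}"
    then have "2*Suc n - 2*l + 1 = Suc (Suc (2*n - 2*l + 1))" by auto
    then show "(2::int)^(2*Suc n - 2*l + 1) * int (catalan (l-1))
       = 4 * ((2::int)^(2*n - 2*l + 1) * int (catalan (l-1)))" by simp
  qed
  also have "\<dots> = 4 * (4^n - int ((2*n) choose n))"
    by (subst sum_distrib_left[symmetric]) (simp only: Suc.IH)
  finally show ?case using binom_step[of n] by simp
qed

theorem corollary8p6:
  fixes \<beta> :: "nat list"
  assumes "is_composition \<beta>" and "even (sum_list \<beta>)" and "0 < sum_list \<beta>"
  shows "(\<Sum>\<alpha> \<in> {\<alpha>. refines \<alpha> \<beta> \<and> odd (hd \<alpha>) \<and> odd (last \<alpha>)}.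
            (-1::int) ^ k_e \<alpha> * 2 ^ (k_o \<beta> - k_o \<alpha> + 1) * int (catalan (k_o \<alpha> div 2 - 1)))
         = 2 ^ k_o \<beta> - int (k_o \<beta> choose (k_o \<beta> div 2))"
proof -
  define m where "m = k_o \<beta>"
  have "even m" using assms(2) even_sum_k_o m_def by simp
  then obtain n where n: "m = 2*n" by blast
  have ne: "\<beta> \<noteq> []" using assms(3) by auto
  define g where "g j = (2::int) ^ (m - j + 1) * int (catalan (j div 2 - 1))" for j
  let ?R = "{\<alpha>. refines \<alpha> \<beta>}"
  have eq: "{\<alpha>. refines \<alpha> \<beta> \<and> odd (hd \<alpha>) \<and> odd (last \<alpha>)}
      = {\<alpha>\<in>?R. odd (hd \<alpha>) \<and> odd (last \<alpha>)}" by auto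
  have "(\<Sum>\<alpha> \<in> {\<alpha>. refines \<alpha> \<beta> \<and> odd (hd \<alpha>) \<and> odd (last \<alpha>)}.
            (-1::int) ^ k_e \<alpha> * 2 ^ (k_o \<beta> - k_o \<alpha> + 1) * int (catalan (k_o \<alpha> div 2 - 1)))
     = (\<Sum>\<alpha>\<in>?R. if odd (hd \<alpha>) \<and> odd (last \<alpha>) then (-1::int) ^ k_e \<alpha> * g (k_o \<alpha>) else 0)"
    unfolding eq sum.inter_filter[OF R_finite] g_def m_def by (intro sum.cong refl) (simp add: mult.assoc)
  also have "\<dots> = (\<Sum>\<alpha>\<in>?R. Sw 0 g \<alpha>)"
  proof (rule sum.cong[OF refl])
    fix \<alpha> assume "\<alpha> \<in> ?R"
    then have "\<alpha> \<noteq> []" using refines_nonempty ne by auto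
    then have "shift 0 \<alpha> = \<alpha>" by (cases \<alpha>) auto
    then show "(if odd (hd \<alpha>) \<and> odd (last \<alpha>) then (-1::int) ^ k_e \<alpha> * g (k_o \<alpha>) else 0) = Sw 0 g \<alpha>"
      unfolding Sw_def by simp
  qed
  also have "\<dots> = D g (k_o (shift 0 \<beta>))" by (rule S_lemma[OF ne assms(1)])
  also have "shift 0 \<beta> = \<beta>" using ne by (cases \<beta>) auto
  also have "D g (k_o \<beta>) = (\<Sum>l\<in>{1..n}. g (2*l))" using D_even n m_def by simp
  also have "\<dots> = (\<Sum>l\<in>{1..n}. (2::int)^(2*n - 2*l + 1) * int (catalan (l-1)))"
    unfolding g_def n by simp
  also have "\<dots> = 4^n - int ((2*n) choose n)" by (rule cat_sum)
  also have "\<dots> = 2 ^ k_o \<beta> - int (k_o \<beta> choose (k_o \<beta> div 2))"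
    unfolding m_def[symmetric] n by (simp add: power_mult)
  finally show ?thesis .
qed

end
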